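(* Let $a\in\mathbb{C}$ with $2a$, $a$, $a+\tfrac12$, $a+1$ not nonpositive integers. Then for every integer $n\ge0$ and every $x\in\mathbb{C}$: $${}_2F_1\!\left(\begin{matrix}-2n,\,a+ix\\ 2a\end{matrix};2\right)={}_3F_2\!\left(\begin{matrix}-n,\,a+ix,\,a-ix\\ a+\frac12,\,a\end{matrix};1\right),\qquad {}_2F_1\!\left(\begin{matrix}-2n-1,\,a+ix\\ 2a\end{matrix};2\right)=\frac{x}{ia}\,{}_3F_2\!\left(\begin{matrix}-n,\,a+ix,\,a-ix\\ a+\frac12,\,a+1\end{matrix};1\right).$$ (That is, for Meixner-Pollaczek and continuous dual Hahn polynomials, $\frac{P_{2n}^{(a)}(x;\frac\pi2)}{P_{2n}^{(a)}(ia;\frac\pi2)}=\frac{S_n(x^2;a,\frac12,0)}{S_n(-a^2;a,\frac12,0)}$ and $\frac{P_{2n+1}^{(a)}(x;\frac\pi2)}{P_{2n+1}^{(a)}(ia;\frac\pi2)}=\frac{x\,S_n(x^2;a,\frac12,1)}{ia\,S_n(-a^2;a,\frac12,1)}$.)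
   Context: ${}_rF_s$ is the generalized hypergeometric series $\sum_k\frac{(a_1)_k\cdots(a_r)_k}{(b_1)_k\cdots(b_s)_k\,k!}z^k$, $(c)_k=c(c+1)\cdots(c+k-1)$; all series terminate. Meixner-Pollaczek: $P_n^{(\lambda)}(x;\phi)/P_n^{(\lambda)}(i\lambda;\phi)={}_2F_1(-n,\lambda+ix;2\lambda;1-e^{-2i\phi})$. Continuous dual Hahn: $S_n(x^2;a,b,c)/S_n(-a^2;a,b,c)={}_3F_2(-n,a+ix,a-ix;a+b,a+c;1)$. *)

theory Defs
  imports "HOL-Analysis.Analysis"
begin

text \<open>Terminating generalized hypergeometric series: the numerator parameter
  list starts with -N for a natural number N, so all terms with index k > N vanish
  (pochhammer (-N) k = 0 for k > N) and the series is the finite sum below.\<close>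
definition hypF_term :: "complex list \<Rightarrow> complex list \<Rightarrow> complex \<Rightarrow> nat \<Rightarrow> complex" where
  "hypF_term as bs z k =
     (\<Prod>a\<leftarrow>as. pochhammer a k) / ((\<Prod>b\<leftarrow>bs. pochhammer b k) * fact k) * z ^ k"

definition hypF_term_series :: "nat \<Rightarrow> complex list \<Rightarrow> complex list \<Rightarrow> complex \<Rightarrow> complex" where
  "hypF_term_series N as bs z = (\<Sum>k\<le>N. hypF_term (- of_nat N # as) bs z k)"

end

theory Submission imports Defs begin

definition B :: "nat \<Rightarrow> (nat \<Rightarrow> complex) \<Rightarrow> complex" where
  "B N f = (\<Sum>k\<le>N. of_nat (N choose k) * f k)"

lemma B_ext: "N \<le> M \<Longrightarrow> B N f = (\<Sum>k\<le>M. of_nat (N choose k) * f k)"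
  unfolding B_def by (rule sum.mono_neutral_left) auto

lemma B_add: "B N (\<lambda>k. f k + g k) = B N f + B N g"
  unfolding B_def by (simp add: sum.distrib algebra_simps)
lemma B_diff: "B N (\<lambda>k. f k - g k) = B N f - B N g"
  unfolding B_def by (simp add: sum_subtractf algebra_simps)
lemma B_cmult: "B N (\<lambda>k. c * f k) = c * B N f"
  unfolding B_def by (simp add: sum_distrib_left algebra_simps)
lemma B_cong: "(\<And>k. k \<le> N \<Longrightarrow> f k = g k) \<Longrightarrow> B N f = B N g"
  unfolding B_def by (rule sum.cong) auto

lemma B_pascal: "B (Suc N) f = B N f + B N (\<lambda>k. f (Suc k))"
proof -
  have "B (Suc N) f = f 0 + (\<Sum>k\<le>N. of_nat (Suc N choose Suc k) * f (Suc k))"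
    unfolding B_def by (subst sum.atMost_Suc_shift) simp
  also have "\<dots> = f 0 + (\<Sum>k\<le>N. of_nat (N choose Suc k) * f (Suc k)) + B N (\<lambda>k. f (Suc k))"
    unfolding B_def by (simp add: sum.distrib algebra_simps)
  also have "f 0 + (\<Sum>k\<le>N. of_nat (N choose Suc k) * f (Suc k)) = (\<Sum>k\<le>Suc N. of_nat (N choose k) * f k)"
    by (subst sum.atMost_Suc_shift) simp
  also have "\<dots> = B N f" by (rule B_ext[symmetric]) simp
  finally show ?thesis .
qed

lemma binom_absorb: "(of_nat N - of_nat k) * (of_nat (N choose k)::complex) = of_nat (Suc k) * of_nat (N choose Suc k)"
proof (cases "k \<le> N")
  case True
  have "(N - k) * (N choose k) = Suc k * (N choose Suc k)"
  proof (cases N)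
    case 0 thus ?thesis using True by simp
  next
    case (Suc m)
    have "(N - k) * (N choose k) = N * (m choose k)" using binomial_absorb_comp[of N k] Suc by simp
    also have "\<dots> = Suc k * (N choose Suc k)" using Suc_times_binomial[of k m] Suc by simp
    finally show ?thesis .
  qed
  hence "of_nat ((N - k) * (N choose k)) = (of_nat (Suc k * (N choose Suc k))::complex)" by simp
  hence "(of_nat N - of_nat k) * (of_nat (N choose k)::complex) = of_nat (Suc k * (N choose Suc k))"
    using True by (simp add: of_nat_diff)
  thus ?thesis by (metis of_nat_mult)
next
  case False thus ?thesis by (simp add: binomial_eq_0)
qed

lemma B_telescope: "B N (\<lambda>k. (of_nat N - of_nat k) * f (Suc k) - of_nat k * f k) = 0"
proof -
  define T where "T k = of_nat k * of_nat (N choose k) * f k" for k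
  have "B N (\<lambda>k. (of_nat N - of_nat k) * f (Suc k) - of_nat k * f k) = (\<Sum>k<Suc N. T (Suc k) - T k)"
    unfolding B_def T_def lessThan_Suc_atMost
  proof (rule sum.cong)
    fix k
    have e: "(of_nat N - of_nat k) * (of_nat (N choose k)::complex) = of_nat (Suc k) * of_nat (N choose Suc k)"
      by (rule binom_absorb)
    show "of_nat (N choose k) * ((of_nat N - of_nat k) * f (Suc k) - of_nat k * f k) =
      of_nat (Suc k) * of_nat (N choose Suc k) * f (Suc k) - of_nat k * of_nat (N choose k) * f k"
      by (simp only: e[symmetric]) (simp add: algebra_simps)
  qed simp
  also have "\<dots> = 0" by (subst sum_lessThan_telescope) (simp add: T_def)
  finally show ?thesis .
qed

lemma B_lower: "B (Suc m) (\<lambda>k. (of_nat (Suc m) - of_nat k) * f k) = of_nat (Suc m) * B m f"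
proof -
  have "B (Suc m) (\<lambda>k. (of_nat (Suc m) - of_nat k) * f k) = (\<Sum>k\<le>Suc m. of_nat (Suc m) * (of_nat (m choose k) * f k))"
    unfolding B_def
  proof (rule sum.cong)
    fix k assume "k \<in> {..Suc m}"
    have "(of_nat (Suc m) - of_nat k) * (of_nat (Suc m choose k)::complex) = of_nat (Suc m) * of_nat (m choose k)"
    proof (cases k)
      case 0 thus ?thesis by simp
    next
      case (Suc j)
      have e: "of_nat k * (of_nat (Suc m choose k)::complex) = of_nat (Suc m) * of_nat (m choose j)"
        using Suc_times_binomial[of j m] Suc by (metis of_nat_mult)
      have "(of_nat (Suc m) - of_nat k) * (of_nat (Suc m choose k)::complex) = of_nat (Suc m) * of_nat (Suc m choose k) - of_nat k * of_nat (Suc m choose k)"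
        by (simp add: algebra_simps)
      also have "\<dots> = of_nat (Suc m) * (of_nat (Suc m choose k) - of_nat (m choose j))"
        by (simp only: e) (simp add: algebra_simps)
      finally show ?thesis using Suc by (simp add: algebra_simps binomial_Suc_Suc)
    qed
    thus "of_nat (Suc m choose k) * ((of_nat (Suc m) - of_nat k) * f k) = of_nat (Suc m) * (of_nat (m choose k) * f k)"
      by (metis mult.assoc mult.commute)
  qed simp
  also have "\<dots> = of_nat (Suc m) * B m f"
    by (simp add: B_ext[of m "Suc m"] sum_distrib_left del: sum.atMost_Suc)
  finally show ?thesis .
qed

lemma poch_neg_nat: "pochhammer (- of_nat N :: complex) k / fact k = (-1)^k * of_nat (N choose k)"
proof -
  have c: "of_nat (N choose k) = ((-1)^k * (pochhammer (- of_nat N) k / fact k) :: complex)"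
    by (simp add: binomial_gbinomial gbinomial_pochhammer)
  have o: "(-1)^k * (-1)^k = (1::complex)" by (simp flip: power_mult_distrib)
  have "pochhammer (- of_nat N :: complex) k / fact k = ((-1)^k * (-1)^k) * (pochhammer (- of_nat N) k / fact k)"
    by (simp only: o mult_1)
  also have "\<dots> = (-1)^k * of_nat (N choose k)" by (simp only: c mult.assoc)
  finally show ?thesis .
qed

lemma hypF_B: "hypF_term_series N as bs z =
   B N (\<lambda>k. (-z)^k * (\<Prod>a\<leftarrow>as. pochhammer a k) / (\<Prod>b\<leftarrow>bs. pochhammer b k))"
  unfolding hypF_term_series_def B_def
proof (rule sum.cong)
  fix k
  have "hypF_term (- of_nat N # as) bs z k =
      (pochhammer (- of_nat N) k / fact k) * (\<Prod>a\<leftarrow>as. pochhammer a k) / (\<Prod>b\<leftarrow>bs. pochhammer b k) * z ^ k"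
    unfolding hypF_term_def by (simp add: divide_inverse mult_ac)
  also have "\<dots> = of_nat (N choose k) * ((-z)^k * (\<Prod>a\<leftarrow>as. pochhammer a k) / (\<Prod>b\<leftarrow>bs. pochhammer b k))"
    by (simp only: poch_neg_nat power_minus[of z k]) (simp add: divide_inverse mult_ac)
  finally show "hypF_term (- of_nat N # as) bs z k = of_nat (N choose k) * ((-z)^k * (\<Prod>a\<leftarrow>as. pochhammer a k) / (\<Prod>b\<leftarrow>bs. pochhammer b k))" .
qed simp

lemma cancel_mult: "(c::complex) \<noteq> 0 \<Longrightarrow> c * (X / (P * c)) = X / P"
  by (cases "P = 0") (simp_all add: field_simps)

lemma F_rec:
  fixes a y :: complex
  defines "s \<equiv> \<lambda>k. (-2)^k * pochhammer (a+y) k / pochhammer (2*a) k"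
  assumes nz: "\<And>k::nat. 2*a + of_nat k \<noteq> 0"
  shows "(2*a + of_nat N) * B (Suc N) s = -2*y * B N s + B N (\<lambda>k. (of_nat N - of_nat k) * s k)"
proof -
  have s1: "(2*a + of_nat k) * s (Suc k) = -2*(a+y+ of_nat k) * s k" for k
  proof -
    have "(2*a + of_nat k) * s (Suc k) = (2*a + of_nat k) * ((-2)^k * (-2) * (pochhammer (a+y) k * (a+y+ of_nat k)) / (pochhammer (2*a) k * (2*a + of_nat k)))"
      unfolding s_def by (simp add: pochhammer_Suc)
    also have "\<dots> = (-2)^k * (-2) * (pochhammer (a+y) k * (a+y+ of_nat k)) / pochhammer (2*a) k"
      using nz[of k] by (rule cancel_mult)
    also have "\<dots> = -2*(a+y+ of_nat k) * s k"
      unfolding s_def by (simp add: algebra_simps)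
    finally show ?thesis .
  qed
  have L: "(2*a + of_nat N) * B (Suc N) s = B N (\<lambda>k. (2*a + of_nat N) * (s k + s (Suc k)))"
    by (simp only: B_pascal distrib_left B_cmult[symmetric] B_add[symmetric])
  have R: "-2*y * B N s + B N (\<lambda>k. (of_nat N - of_nat k) * s k) = B N (\<lambda>k. -2*y * s k + (of_nat N - of_nat k) * s k)"
    by (simp only: B_cmult[symmetric] B_add[symmetric])
  have "B N (\<lambda>k. (2*a + of_nat N) * (s k + s (Suc k)) - (-2*y * s k + (of_nat N - of_nat k) * s k))
      = B N (\<lambda>k. (of_nat N - of_nat k) * s (Suc k) - of_nat k * s k)"
  proof (rule B_cong)
    fix k
    have "(2*a + of_nat N) * s (Suc k) = (2*a + of_nat k) * s (Suc k) + (of_nat N - of_nat k) * s (Suc k)"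
      by (simp add: algebra_simps)
    also have "\<dots> = -2*(a+y+ of_nat k) * s k + (of_nat N - of_nat k) * s (Suc k)" by (simp only: s1)
    finally have e: "(2*a + of_nat N) * s (Suc k) = -2*(a+y+ of_nat k) * s k + (of_nat N - of_nat k) * s (Suc k)" .
    show "(2*a + of_nat N) * (s k + s (Suc k)) - (-2*y * s k + (of_nat N - of_nat k) * s k) =
       (of_nat N - of_nat k) * s (Suc k) - of_nat k * s k"
      by (simp only: distrib_left e) (simp add: algebra_simps)
  qed
  also have "\<dots> = 0" by (rule B_telescope)
  finally show ?thesis unfolding L R B_diff by simp
qed

lemma gen1: "(c::complex) \<noteq> 0 \<Longrightarrow> c * (X * m / (D * c)) = m * (X / D)"
  by (cases "D = 0") (simp_all add: field_simps)

lemma gen2: "R0 * (c::complex) = a * R1 \<Longrightarrow> R0 \<noteq> 0 \<Longrightarrow> R1 \<noteq> 0 \<Longrightarrow> c * (X / (Q * R1)) = a * (X / (Q * R0))"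
  by (cases "Q = 0") (simp_all add: field_simps)

locale GH =
  fixes a y :: complex
  assumes A0: "\<forall>m::nat. a \<noteq> - of_nat m"
      and A3: "\<forall>m::nat. a + 1/2 \<noteq> - of_nat m"
      and A4: "\<forall>m::nat. a + 1 \<noteq> - of_nat m"
begin

definition g where "g j = (-1)^j * (pochhammer (a+y) j * pochhammer (a-y) j) / (pochhammer (a+1/2) j * pochhammer a j)"
definition h where "h j = (-1)^j * (pochhammer (a+y) j * pochhammer (a-y) j) / (pochhammer (a+1/2) j * pochhammer (a+1) j)"

lemma nz: "a \<noteq> 0" "a + of_nat j \<noteq> 0" "a + 1/2 + of_nat j \<noteq> 0"
   "pochhammer a j \<noteq> 0" "pochhammer (a+1) j \<noteq> 0" "pochhammer (a+1/2) j \<noteq> 0"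
proof -
  show "a \<noteq> 0" using A0[rule_format, of 0] by simp
  show "a + of_nat j \<noteq> 0"
  proof
    assume "a + of_nat j = 0"
    hence "a = - of_nat j" by (simp add: eq_neg_iff_add_eq_0)
    with A0 show False by blast
  qed
  show "a + 1/2 + of_nat j \<noteq> 0"
  proof
    assume "a + 1/2 + of_nat j = 0"
    hence "a + 1/2 = - of_nat j" by (simp add: eq_neg_iff_add_eq_0)
    with A3 show False by blast
  qed
  show "pochhammer a j \<noteq> 0" using A0 by (auto simp: pochhammer_eq_0_iff)
  show "pochhammer (a+1) j \<noteq> 0" using A4 by (auto simp: pochhammer_eq_0_iff)
  show "pochhammer (a+1/2) j \<noteq> 0" using A3 by (auto simp: pochhammer_eq_0_iff)
qed

lemma hg: "(a + of_nat j) * h j = a * g j"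
proof -
  have e: "pochhammer a j * (a + of_nat j) = a * pochhammer (a+1) j"
    using pochhammer_Suc[of a j] pochhammer_rec[of a j] by simp
  show ?thesis unfolding g_def h_def
    using gen2[OF e nz(4) nz(5)] by simp
qed

lemma g1: "(a + 1/2 + of_nat j) * (a + of_nat j) * g (Suc j) = - ((a + of_nat j)^2 - y^2) * g j"
proof -
  have X: "(-1)^Suc j * (pochhammer (a+y) (Suc j) * pochhammer (a-y) (Suc j))
     = (-1)^j * (pochhammer (a+y) j * pochhammer (a-y) j) * (- ((a + of_nat j)^2 - y^2))"
    by (simp add: pochhammer_Suc power2_eq_square algebra_simps)
  have D: "pochhammer (a+1/2) (Suc j) * pochhammer a (Suc j) = 
     (pochhammer (a+1/2) j * pochhammer a j) * ((a + 1/2 + of_nat j) * (a + of_nat j))"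
    by (simp add: pochhammer_Suc algebra_simps)
  have c: "(a + 1/2 + of_nat j) * (a + of_nat j) \<noteq> 0" using nz(2,3) by simp
  show ?thesis unfolding g_def X D by (rule gen1[OF c])
qed

lemma key: "(2*y^2/a) * h j = 2*(a + of_nat j) * g j + (2*a + 2* of_nat j + 1) * g (Suc j)"
proof -
  have "(a + of_nat j) * ((2*y^2/a) * h j) = (2*y^2/a) * (a * g j)"
    by (simp only: hg[symmetric] mult_ac)
  also have "\<dots> = 2 * (y^2 * g j)" using nz(1) by (simp add: field_simps)
  also have "y^2 * g j = (a + of_nat j)^2 * g j + (a + 1/2 + of_nat j) * (a + of_nat j) * g (Suc j)"
    using g1[of j] by (simp add: algebra_simps)
  finally have "(a + of_nat j) * ((2*y^2/a) * h j) = (a + of_nat j) * (2*(a + of_nat j) * g j + (2*a + 2* of_nat j + 1) * g (Suc j))"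
    by (simp add: algebra_simps power2_eq_square)
  thus ?thesis using mult_left_cancel[OF nz(2)[of j]] by blast
qed

lemma G2: "(2*a + 2* of_nat n + 1) * B (Suc n) g = (2*y^2/a) * B n h + (2* of_nat n + 1) * B n g"
proof -
  have L: "(2*a + 2* of_nat n + 1) * B (Suc n) g = B n (\<lambda>k. (2*a + 2* of_nat n + 1) * (g k + g (Suc k)))"
    by (simp only: B_pascal distrib_left B_cmult[symmetric] B_add[symmetric])
  have R: "(2*y^2/a) * B n h + (2* of_nat n + 1) * B n g = B n (\<lambda>k. (2*y^2/a) * h k + (2* of_nat n + 1) * g k)"
    by (simp only: B_cmult[symmetric] B_add[symmetric])
  have "B n (\<lambda>k. (2*a + 2* of_nat n + 1) * (g k + g (Suc k)) - ((2*y^2/a) * h k + (2* of_nat n + 1) * g k))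
      = B n (\<lambda>k. 2 * ((of_nat n - of_nat k) * g (Suc k) - of_nat k * g k))"
  proof (rule B_cong)
    fix k
    show "(2*a + 2* of_nat n + 1) * (g k + g (Suc k)) - ((2*y^2/a) * h k + (2* of_nat n + 1) * g k)
      = 2 * ((of_nat n - of_nat k) * g (Suc k) - of_nat k * g k)"
      by (simp only: key) (simp add: algebra_simps)
  qed
  also have "\<dots> = 0" by (simp only: B_cmult B_telescope) simp
  finally show ?thesis unfolding L R B_diff by simp
qed

lemma G1: "(a + of_nat (Suc n)) * B (Suc n) h = a * B (Suc n) g + of_nat (Suc n) * B n h"
proof -
  have "a * B (Suc n) g + of_nat (Suc n) * B n h = B (Suc n) (\<lambda>j. a * g j + (of_nat (Suc n) - of_nat j) * h j)"
    by (subst B_lower[symmetric]) (simp only: B_cmult[symmetric] B_add[symmetric])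
  also have "\<dots> = B (Suc n) (\<lambda>j. (a + of_nat (Suc n)) * h j)"
  proof (rule B_cong)
    fix j
    show "a * g j + (of_nat (Suc n) - of_nat j) * h j = (a + of_nat (Suc n)) * h j"
      by (simp only: hg[symmetric]) (simp add: algebra_simps)
  qed
  finally show ?thesis by (simp only: B_cmult)
qed

end

theorem mainTheorem13:
  fixes a x :: complex and n :: nat
  assumes "\<forall>m::nat. 2 * a \<noteq> - of_nat m"
      and "\<forall>m::nat. a \<noteq> - of_nat m"
      and "\<forall>m::nat. a + 1/2 \<noteq> - of_nat m"
      and "\<forall>m::nat. a + 1 \<noteq> - of_nat m"
  shows "hypF_term_series (2 * n) [a + \<i> * x] [2 * a] 2
           = hypF_term_series n [a + \<i> * x, a - \<i> * x] [a + 1/2, a] 1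
         \<and> hypF_term_series (2 * n + 1) [a + \<i> * x] [2 * a] 2
           = x / (\<i> * a) * hypF_term_series n [a + \<i> * x, a - \<i> * x] [a + 1/2, a + 1] 1"
proof -
  define y where "y = \<i> * x"
  interpret GH a y using assms(2-4) by unfold_locales
  define s where "s = (\<lambda>k. (-2)^k * pochhammer (a+y) k / pochhammer (2*a) k)"
  have nz2: "2*a + of_nat k \<noteq> 0" for k :: nat
  proof
    assume "2*a + of_nat k = 0"
    hence "2*a = - of_nat k" by (simp add: eq_neg_iff_add_eq_0)
    with assms(1) show False by blast
  qed
  have FR: "(2*a + of_nat N) * B (Suc N) s = -2*y * B N s + B N (\<lambda>k. (of_nat N - of_nat k) * s k)" for N
    unfolding s_def by (rule F_rec[OF nz2])
  have E1: "hypF_term_series N [a + \<i> * x] [2 * a] 2 = B N s" for N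
    unfolding hypF_B s_def y_def[symmetric] by (rule B_cong) simp
  have E2: "hypF_term_series n [a + \<i> * x, a - \<i> * x] [a + 1/2, a] 1 = B n g"
    unfolding hypF_B g_def y_def[symmetric] by (rule B_cong) simp
  have E3: "hypF_term_series n [a + \<i> * x, a - \<i> * x] [a + 1/2, a + 1] 1 = B n h"
    unfolding hypF_B h_def y_def[symmetric] by (rule B_cong) simp
  have Q: "B (2*m) s = B m g \<and> B (Suc (2*m)) s = (-y/a) * B m h" for m
  proof (induction m)
    case 0
    have "B (Suc 0) s = 1 + (-2) * (a+y) / (2*a)" by (simp add: B_def s_def)
    also have "\<dots> = -y/a" using nz(1) by (simp add: field_simps)
    finally show ?case by (simp add: B_def g_def h_def s_def)
  next
    case (Suc m)
    have c1: "2*a + 2* of_nat m + 1 \<noteq> 0" using nz(3)[of m] by (simp add: field_simps)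
    have c2: "2*a + 2* of_nat m + 2 \<noteq> 0"
    proof -
      have e: "2*a + 2* of_nat m + 2 = 2*(a + of_nat (Suc m))" by (simp add: algebra_simps)
      show ?thesis unfolding e using nz(2)[of "Suc m"] by (simp only: mult_eq_0_iff) simp
    qed
    have r1: "(2*a + 2* of_nat m + 1) * B (2*Suc m) s = -2*y * B (Suc (2*m)) s + of_nat (Suc (2*m)) * B (2*m) s"
      using FR[of "Suc (2*m)"] B_lower[of "2*m" s] by (simp add: algebra_simps)
    also have "\<dots> = (2*y^2/a) * B m h + (2* of_nat m + 1) * B m g"
      using Suc.IH by (simp add: algebra_simps power2_eq_square)
    also have "\<dots> = (2*a + 2* of_nat m + 1) * B (Suc m) g" by (rule G2[symmetric])
    finally have A: "B (2*Suc m) s = B (Suc m) g" using c1 by simp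
    have "(2*a + 2* of_nat m + 2) * B (Suc (2*Suc m)) s = -2*y * B (2*Suc m) s + of_nat (Suc (Suc (2*m))) * B (Suc (2*m)) s"
      using FR[of "Suc (Suc (2*m))"] B_lower[of "Suc (2*m)" s] by (simp add: algebra_simps)
    also have "\<dots> = -2*y * B (Suc m) g + (2* of_nat m + 2) * ((-y/a) * B m h)"
      using Suc.IH A by (simp add: algebra_simps)
    also have "\<dots> = (-2*y/a) * (a * B (Suc m) g + of_nat (Suc m) * B m h)"
      using nz(1) by (simp add: field_simps)
    also have "\<dots> = (-2*y/a) * ((a + of_nat (Suc m)) * B (Suc m) h)" by (simp only: G1)
    also have "\<dots> = (2*a + 2* of_nat m + 2) * ((-y/a) * B (Suc m) h)" by (simp add: algebra_simps)
    finally have "B (Suc (2*Suc m)) s = (-y/a) * B (Suc m) h" using mult_left_cancel[OF c2] by blast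
    with A show ?case by simp
  qed
  have yx: "-y/a = x / (\<i> * a)" unfolding y_def using nz(1) by (simp add: field_simps)
  have q1: "B (2*n) s = B n g" using Q[of n] by blast
  have q2: "B (2*n+1) s = (-y/a) * B n h" using Q[of n] by (simp only: Suc_eq_plus1)
  show ?thesis unfolding E1 E2 E3 yx[symmetric] using q1 q2 by (rule conjI)
qed

end
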